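(* Let $\tau$ be a Polish topology on $I(\mathbb N)$ making it a topological inverse semigroup, such that the map $2^{\mathbb N}\to(I(\mathbb N),\tau)$, $A\mapsto 1_A$, is continuous. Let $Y$ be a countable set with $\mathbb N\subseteq Y$ and $Y\setminus\mathbb N$ infinite, and let $f_k,f\in S_\infty(Y)$ with $f_k\to f$ in $S_\infty(Y)$. Then there is a dense $G_\delta$ set $G\subseteq S_\infty(Y)$ such that $\widehat{f_k}\circ\widehat g\to\widehat f\circ\widehat g$ in $\tau$ for all $g\in G$.
   Context: $I(\mathbb N)$ is the set of all bijections $f:A\to B$ with $A,B\subseteq\mathbb N$ (including the empty map), with composition $\mathrm{dom}(f\circ g)=g^{-1}(\mathrm{dom}(f)\cap\mathrm{im}(g))$ and inversion $f\mapsto f^{-1}$; $1_A$ is the identity on $A$. $2^{\mathbb N}$ is the Cantor space (power set with product topology). $S_\infty(Y)$ is the group of all bijections $Y\to Y$ with the topology of pointwise convergence ($Y$ discrete). For $h\in S_\infty(Y)$, $\widehat h\in I(\mathbb N)$ is the restriction of $h$ to $\mathbb N\cap h^{-1}(\mathbb N)$. A topological inverse semigroup has continuous multiplication and inversion. *)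

theory Defs
  imports "HOL-Analysis.Analysis"
begin

text \<open>Partial bijections of nat, represented as partial maps nat to nat option
  that are injective on their domain.  The carrier of I(N).\<close>
type_synonym pbij = "nat \<Rightarrow> nat option"

definition IN :: "pbij set" where
  "IN = {f. inj_on f (dom f)}"

text \<open>Composition (f o g): first g then f; dom = g^-1(dom f \<inter> im g).\<close>
definition pcomp :: "pbij \<Rightarrow> pbij \<Rightarrow> pbij" where
  "pcomp f g = f \<circ>\<^sub>m g"

definition pinv :: "pbij \<Rightarrow> pbij" where
  "pinv f = (\<lambda>y. if y \<in> ran f then Some (THE x. f x = Some y) else None)"

text \<open>The partial identity 1_A, with A given by its characteristic function (Cantor space).\<close>
definition pid :: "(nat \<Rightarrow> bool) \<Rightarrow> pbij" where
  "pid A = (\<lambda>n. if A n then Some n else None)"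

definition cantor_space :: "(nat \<Rightarrow> bool) topology" where
  "cantor_space = product_topology (\<lambda>_. discrete_topology UNIV) UNIV"

definition Polish_space :: "'a topology \<Rightarrow> bool" where
  "Polish_space X \<longleftrightarrow> completely_metrizable_space X \<and> separable_space X"

definition topological_inverse_semigroup_IN :: "pbij topology \<Rightarrow> bool" where
  "topological_inverse_semigroup_IN T \<longleftrightarrow>
     topspace T = IN \<and>
     continuous_map (prod_topology T T) T (\<lambda>(f, g). pcomp f g) \<and>
     continuous_map T T pinv"

text \<open>S_infinity(Y): bijections of Y (extensional, i.e. undefined outside Y) with the
  topology of pointwise convergence, Y discrete.\<close>
definition Sinf :: "'a set \<Rightarrow> ('a \<Rightarrow> 'a) topology" where
  "Sinf Y = subtopology (product_topology (\<lambda>_. discrete_topology Y) Y)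
                        {h \<in> extensional Y. bij_betw h Y Y}"

text \<open>N is embedded into Y via an injection e.  hat h is the restriction of h
  to N \<inter> h^-1(N), as a partial bijection of N.\<close>
definition hat :: "(nat \<Rightarrow> 'a) \<Rightarrow> ('a \<Rightarrow> 'a) \<Rightarrow> pbij" where
  "hat e h = (\<lambda>n. if h (e n) \<in> range e then Some (inv e (h (e n))) else None)"

end

theory Submission
  imports Defs
begin
lemma baire1_cont:
  fixes X :: "'a topology" and \<phi> :: "nat \<Rightarrow> 'a \<Rightarrow> 'b"
  assumes X: "completely_metrizable_space X"
    and MS: "Metric_space M d"
    and cont: "\<And>n. continuous_map X (Metric_space.mtopology M d) (\<phi> n)"
    and lim: "\<And>x. x \<in> topspace X \<Longrightarrow> limitin (Metric_space.mtopology M d) (\<lambda>n. \<phi> n x) (\<Phi> x) sequentially"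
  shows "\<exists>G. gdelta_in X G \<and> X closure_of G = topspace X \<and>
     (\<forall>x\<in>G. \<forall>xs. limitin X xs x sequentially \<longrightarrow> limitin (Metric_space.mtopology M d) (\<lambda>k. \<Phi> (xs k)) (\<Phi> x) sequentially)"
proof -
  interpret Metric_space M d by (fact MS)
  define E where "E m N = {x \<in> topspace X. \<forall>p\<ge>N. \<forall>q\<ge>N. d (\<phi> p x) (\<phi> q x) \<le> 1 / Suc m}" for m N :: nat
  define D where "D m N = (topspace X - E m N) \<union> X interior_of (E m N)" for m N
  have inM: "\<phi> n x \<in> M" if "x \<in> topspace X" for n x
    using continuous_map_image_subset_topspace[OF cont[of n]] that topspace_mtopology by blast
  have PhiM: "\<Phi> x \<in> M" if "x \<in> topspace X" for x
    using lim[OF that] limitin_topspace topspace_mtopology by metis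
  have closedE: "closedin X (E m N)" for m N
  proof -
    have cd: "continuous_map X euclidean (\<lambda>x. d (\<phi> p x) (\<phi> q x))" for p q
      using continuous_map_mdist[of X "metric (M,d)" "\<phi> p" "\<phi> q"] cont by simp
    have cl: "closedin X {x \<in> topspace X. d (\<phi> p x) (\<phi> q x) \<le> 1 / Suc m}" for p q
      using closedin_continuous_map_preimage[OF cd, of "{..1 / Suc m}"] by simp
    have "E m N = topspace X \<inter> (\<Inter>pq\<in>{N..}\<times>{N..}. {x \<in> topspace X. d (\<phi> (fst pq) x) (\<phi> (snd pq) x) \<in> {..1 / Suc m}})"
      unfolding E_def by auto
    also have "closedin X \<dots>"
      by (intro closedin_Int closedin_topspace closedin_Inter) 
         (auto intro!: cl[simplified])
    finally show ?thesis .
  qed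
  have openD: "openin X (D m N)" for m N
    unfolding D_def using closedE by (auto simp: closedin_def)
  have denseD: "X closure_of (D m N) = topspace X" for m N
  proof
    show "X closure_of D m N \<subseteq> topspace X" by (rule closure_of_subset_topspace)
    show "topspace X \<subseteq> X closure_of D m N"
    proof
      fix x assume x: "x \<in> topspace X"
      show "x \<in> X closure_of D m N"
        unfolding in_closure_of
      proof (intro conjI x allI impI)
        fix T assume T: "x \<in> T \<and> openin X T"
        show "\<exists>y. y \<in> D m N \<and> y \<in> T"
        proof (cases "T \<subseteq> E m N")
          case True
          then have "T \<subseteq> X interior_of E m N" using T interior_of_maximal by blast
          then show ?thesis using T unfolding D_def by blast
        next
          case False
          then obtain y where "y \<in> T" "y \<notin> E m N" by blast
          moreover have "y \<in> topspace X" using T \<open>y \<in> T\<close> openin_subset by blast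
          ultimately show ?thesis unfolding D_def by blast
        qed
      qed
    qed
  qed
  define G where "G = \<Inter> (range (case_prod D))"
  have Gsub: "G \<subseteq> topspace X"
    unfolding G_def D_def using interior_of_subset_topspace by fastforce
  have gd: "gdelta_in X G"
    unfolding gdelta_in_alt intersection_of_def
    using Gsub openD G_def by (intro conjI exI[of _ "range (case_prod D)"]) auto
  have dense: "X closure_of G = topspace X"
    unfolding G_def
    by (rule Baire_category) (use X openD denseD in auto)
  have covers: "\<exists>N. x \<in> E m N" if x: "x \<in> topspace X" for x m
  proof -
    have "(0::real) < 1 / Suc m / 2" by simp
    then obtain N where N: "\<forall>n\<ge>N. d (\<phi> n x) (\<Phi> x) < 1 / Suc m / 2"
      using lim[OF x] unfolding limitin_metric eventually_sequentially by blast
    have "d (\<phi> p x) (\<phi> q x) \<le> 1 / Suc m" if "p \<ge> N" "q \<ge> N" for p q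
    proof -
      have "d (\<phi> p x) (\<phi> q x) \<le> d (\<phi> p x) (\<Phi> x) + d (\<Phi> x) (\<phi> q x)"
        using triangle inM PhiM x by blast
      also have "\<dots> \<le> 1 / Suc m"
      proof -
        have "d (\<phi> p x) (\<Phi> x) < 1 / Suc m / 2" "d (\<phi> q x) (\<Phi> x) < 1 / Suc m / 2" using N that by auto
        then show ?thesis using commute[of "\<Phi> x" "\<phi> q x"] by linarith
      qed
      finally show ?thesis .
    qed
    then show ?thesis using x unfolding E_def by blast
  qed
  have bound: "d (\<phi> N y) (\<Phi> y) \<le> 1 / Suc m" if y: "y \<in> E m N" for y m N
  proof (rule ccontr)
    assume "\<not> ?thesis"
    then have pos: "d (\<phi> N y) (\<Phi> y) - 1 / Suc m > 0" by simp
    have yt: "y \<in> topspace X" using y unfolding E_def by blast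
    obtain q0 where q0: "\<forall>q\<ge>q0. d (\<phi> q y) (\<Phi> y) < d (\<phi> N y) (\<Phi> y) - 1 / Suc m"
      using lim[OF yt] pos unfolding limitin_metric eventually_sequentially by blast
    define q where "q = max q0 N"
    have "d (\<phi> N y) (\<Phi> y) \<le> d (\<phi> N y) (\<phi> q y) + d (\<phi> q y) (\<Phi> y)"
      using triangle inM PhiM yt by blast
    also have "\<dots> < 1 / Suc m + (d (\<phi> N y) (\<Phi> y) - 1 / Suc m)"
      using y q0 unfolding E_def q_def by (intro add_le_less_mono) auto
    finally show False by simp
  qed
  have contpt: "limitin mtopology (\<lambda>k. \<Phi> (xs k)) (\<Phi> x) sequentially"
    if x: "x \<in> G" and xs: "limitin X xs x sequentially" for x xs
  proof -
    have xt: "x \<in> topspace X" using x Gsub by blast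
    show ?thesis
      unfolding limitin_metric
    proof (intro conjI allI impI)
      show "\<Phi> x \<in> M" using PhiM xt .
      fix \<epsilon> :: real assume "\<epsilon> > 0"
      then obtain m :: nat where m: "3 / Suc m < \<epsilon>"
      proof -
        obtain m :: nat where "3 / \<epsilon> < m" using reals_Archimedean2 by blast
        then have h1: "3 < real m * \<epsilon>" using \<open>\<epsilon> > 0\<close> by (simp add: divide_less_eq)
        have h2: "real m * \<epsilon> < \<epsilon> * real (Suc m)" using \<open>\<epsilon> > 0\<close> by (simp add: algebra_simps)
        have "3 / Suc m < \<epsilon>" using h1 h2 by (subst pos_divide_less_eq) auto
        then show ?thesis using that by blast
      qed
      define c :: real where "c = 1 / Suc m"
      obtain N where N: "x \<in> E m N" using covers xt by blast
      have "x \<in> D m N" using x unfolding G_def by blast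
      then have xint: "x \<in> X interior_of E m N" using N unfolding D_def by blast
      have ev1: "eventually (\<lambda>k. xs k \<in> X interior_of E m N) sequentially"
        using xs xint unfolding limitin_def by auto
      have "limitin mtopology (\<phi> N \<circ> xs) (\<phi> N x) sequentially"
        by (rule continuous_map_limit[OF cont xs])
      then have ev2: "eventually (\<lambda>k. \<phi> N (xs k) \<in> M \<and> d (\<phi> N (xs k)) (\<phi> N x) < c) sequentially"
        unfolding limitin_metric c_def by auto
      show "eventually (\<lambda>k. \<Phi> (xs k) \<in> M \<and> d (\<Phi> (xs k)) (\<Phi> x) < \<epsilon>) sequentially"
        using ev1 ev2
      proof eventually_elim
        case (elim k)
        have yE: "xs k \<in> E m N" by (rule subsetD[OF interior_of_subset elim(1)])
        have yt: "xs k \<in> topspace X" using yE unfolding E_def by blast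
        have "d (\<Phi> (xs k)) (\<Phi> x) \<le> d (\<Phi> (xs k)) (\<phi> N (xs k)) + d (\<phi> N (xs k)) (\<Phi> x)"
          using triangle[of "\<Phi> (xs k)" "\<phi> N (xs k)" "\<Phi> x"] inM PhiM xt yt by blast
        also have "\<dots> \<le> d (\<Phi> (xs k)) (\<phi> N (xs k)) + (d (\<phi> N (xs k)) (\<phi> N x) + d (\<phi> N x) (\<Phi> x))"
          using triangle[of "\<phi> N (xs k)" "\<phi> N x" "\<Phi> x"] inM PhiM xt yt by (meson add_left_mono)
        also have "\<dots> \<le> c + (c + c)"
          using bound[OF yE] bound[OF N] elim commute[of "\<Phi> (xs k)" "\<phi> N (xs k)"] 
          unfolding c_def by (intro add_mono) auto
        also have "\<dots> < \<epsilon>" using m unfolding c_def by simp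
        finally show ?case using PhiM yt by simp
      qed
    qed
  qed
  show ?thesis using gd dense contpt by blast
qed

lemma limitin_discrete:
  "limitin (discrete_topology U) a l F \<longleftrightarrow> l \<in> U \<and> eventually (\<lambda>x. a x = l) F"
proof
  assume L: "limitin (discrete_topology U) a l F"
  then have "l \<in> U" using limitin_topspace[OF L] by simp
  moreover have "eventually (\<lambda>x. a x \<in> {l}) F"
  proof -
    have "\<forall>V. openin (discrete_topology U) V \<and> l \<in> V \<longrightarrow> eventually (\<lambda>x. a x \<in> V) F"
      using L unfolding limitin_def by (rule conjunct2)
    from this[rule_format, of "{l}"] show ?thesis using \<open>l \<in> U\<close> by simp
  qed
  ultimately show "l \<in> U \<and> eventually (\<lambda>x. a x = l) F" by simp
next
  assume "l \<in> U \<and> eventually (\<lambda>x. a x = l) F"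
  then show "limitin (discrete_topology U) a l F"
    unfolding limitin_def by (auto elim: eventually_mono)
qed

lemma topspace_Sinf: "topspace (Sinf Y) = {h \<in> extensional Y. bij_betw h Y Y}"
  unfolding Sinf_def by (auto simp: PiE_def bij_betw_def)

lemma openin_proj_eq:
  assumes "y \<in> Y"
  shows "openin (product_topology (\<lambda>_. discrete_topology Y) Y)
           {v \<in> topspace (product_topology (\<lambda>_. discrete_topology Y) Y). v y = c}"
proof -
  let ?P = "product_topology (\<lambda>_. discrete_topology Y) Y"
  have cm: "continuous_map ?P (discrete_topology Y) (\<lambda>v. v y)"
    by (rule continuous_map_product_projection) fact
  have "openin ?P {v \<in> topspace ?P. v y \<in> {c} \<inter> Y}"
    by (rule openin_continuous_map_preimage[OF cm]) auto
  moreover have "{v \<in> topspace ?P. v y \<in> {c} \<inter> Y} = {v \<in> topspace ?P. v y = c}"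
    using continuous_map_image_subset_topspace[OF cm] by auto
  ultimately show ?thesis by simp
qed

lemma openin_Sinf_eq:
  assumes "y \<in> Y"
  shows "openin (Sinf Y) {v \<in> topspace (Sinf Y). v y = c}"
proof -
  let ?P = "product_topology (\<lambda>_. discrete_topology Y) Y"
  have cm: "continuous_map (Sinf Y) (discrete_topology Y) (\<lambda>v. v y)"
    unfolding Sinf_def
    by (rule continuous_map_from_subtopology, rule continuous_map_product_projection) fact
  have "openin (Sinf Y) {v \<in> topspace (Sinf Y). v y \<in> {c} \<inter> Y}"
    by (rule openin_continuous_map_preimage[OF cm]) auto
  moreover have "{v \<in> topspace (Sinf Y). v y \<in> {c} \<inter> Y} = {v \<in> topspace (Sinf Y). v y = c}"
    using continuous_map_image_subset_topspace[OF cm] by auto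
  ultimately show ?thesis by simp
qed

lemma cm_Sinf:
  assumes "countable Y"
  shows "completely_metrizable_space (Sinf Y)"
proof -
  let ?P = "product_topology (\<lambda>_. discrete_topology Y) Y"
  let ?S = "{h \<in> extensional Y. bij_betw h Y Y}"
  have cP: "completely_metrizable_space ?P"
    unfolding completely_metrizable_space_product_topology
    using assms by (auto simp: completely_metrizable_space_discrete_topology
        intro: countable_subset[of _ Y])
  define A where "A = (\<lambda>(x,x'). {h \<in> topspace ?P. h x \<noteq> h x'}) ` {(x,x'). x \<in> Y \<and> x' \<in> Y \<and> x \<noteq> x'}"
  define B where "B = (\<lambda>y. {h \<in> topspace ?P. \<exists>x\<in>Y. h x = y}) ` Y"
  have oA: "openin ?P T" if TA: "T \<in> A" for T
  proof -
    obtain p where p: "T = (\<lambda>(x,x'). {h \<in> topspace ?P. h x \<noteq> h x'}) p"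
      "p \<in> {(x,x'). x \<in> Y \<and> x' \<in> Y \<and> x \<noteq> x'}"
      using TA unfolding A_def by (rule imageE)
    obtain x x' where pxx: "p = (x,x')" by (cases p)
    have xx: "x \<in> Y" "x' \<in> Y" using p(2) pxx by auto
    have T: "T = {h \<in> topspace ?P. h x \<noteq> h x'}" using p(1) pxx by simp
    show ?thesis
    proof (subst openin_subopen, intro ballI)
      fix h assume h: "h \<in> T"
      show "\<exists>W. openin ?P W \<and> h \<in> W \<and> W \<subseteq> T"
        by (rule exI[of _ "{v \<in> topspace ?P. v x = h x} \<inter> {v \<in> topspace ?P. v x' = h x'}"])
           (intro conjI openin_Int openin_proj_eq xx, use h T in auto)
    qed
  qed
  have oB: "openin ?P T" if TB: "T \<in> B" for T
  proof -
    obtain y where T: "T = {h \<in> topspace ?P. \<exists>x\<in>Y. h x = y}"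
      using TB unfolding B_def by auto
    have "T = \<Union>((\<lambda>x. {h \<in> topspace ?P. h x = y}) ` Y)" unfolding T by auto
    then show ?thesis by (auto intro!: openin_Union openin_proj_eq simp del: topspace_product_topology)
  qed
  have "countable {(x,x'). x \<in> Y \<and> x' \<in> Y \<and> x \<noteq> x'}"
    by (rule countable_subset[of _ "Y \<times> Y"]) (use assms in auto)
  then have cA: "countable A" unfolding A_def by simp
  have cB: "countable B" unfolding B_def using assms by simp
  have eq: "\<Inter>(A \<union> B \<union> {topspace ?P}) = ?S"
  proof (intro equalityI subsetI)
    fix h assume h: "h \<in> \<Inter>(A \<union> B \<union> {topspace ?P})"
    then have hP: "h \<in> topspace ?P" by blast
    have inj: "inj_on h Y"
    proof (rule inj_onI, rule ccontr)
      fix x x' assume "x \<in> Y" "x' \<in> Y" "h x = h x'" "x \<noteq> x'"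
      then have "{h \<in> topspace ?P. h x \<noteq> h x'} \<in> A" unfolding A_def by auto
      then show False using h \<open>h x = h x'\<close> by blast
    qed
    have sur: "y \<in> h ` Y" if "y \<in> Y" for y
    proof -
      have "{h \<in> topspace ?P. \<exists>x\<in>Y. h x = y} \<in> B" using that unfolding B_def by auto
      then show ?thesis using h by blast
    qed
    show "h \<in> ?S" using hP inj sur by (auto simp: bij_betw_def PiE_def Pi_def)
  next
    fix h assume h: "h \<in> ?S"
    then have hP: "h \<in> topspace ?P" by (auto simp: bij_betw_def PiE_def)
    show "h \<in> \<Inter>(A \<union> B \<union> {topspace ?P})"
      using h hP unfolding A_def B_def by (auto simp: bij_betw_def inj_on_def) (metis imageE)
  qed
  have gd: "gdelta_in ?P ?S"
    unfolding gdelta_in_alt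
  proof
    show "?S \<subseteq> topspace ?P" by (auto simp: bij_betw_def PiE_def)
    show "(countable intersection_of openin ?P) ?S"
      unfolding intersection_of_def
      by (rule exI[of _ "A \<union> B \<union> {topspace ?P}"]) (use cA cB oA oB eq openin_topspace[of ?P] in \<open>auto simp del: topspace_product_topology\<close>)
  qed
  show ?thesis unfolding Sinf_def
    by (rule completely_metrizable_space_gdelta_in[OF cP gd])
qed

lemma locally_const_cont:
  assumes "\<And>x. x \<in> topspace X \<Longrightarrow> \<phi> x \<in> topspace T"
    and "\<And>x. x \<in> topspace X \<Longrightarrow> \<exists>W. openin X W \<and> x \<in> W \<and> (\<forall>y\<in>W. \<phi> y = \<phi> x)"
  shows "continuous_map X T \<phi>"
  unfolding continuous_map_def
proof (intro conjI allI impI)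
  show "\<phi> \<in> topspace X \<rightarrow> topspace T" using assms(1) by auto
  fix U assume "openin T U"
  show "openin X {x \<in> topspace X. \<phi> x \<in> U}"
  proof (subst openin_subopen, intro ballI)
    fix x assume x: "x \<in> {x \<in> topspace X. \<phi> x \<in> U}"
    then obtain W where W: "openin X W" "x \<in> W" "\<forall>y\<in>W. \<phi> y = \<phi> x" using assms(2) by blast
    then show "\<exists>T. openin X T \<and> x \<in> T \<and> T \<subseteq> {x \<in> topspace X. \<phi> x \<in> U}"
    proof (intro exI[of _ W] conjI W(1,2) subsetI)
      fix y assume "y \<in> W"
      then show "y \<in> {x \<in> topspace X. \<phi> x \<in> U}" using x W(3) openin_subset[OF W(1)] by auto
    qed
  qed
qed

lemma hat_IN:
  assumes "inj_on h Y" "range e \<subseteq> Y" "inj e"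
  shows "hat e h \<in> IN"
  unfolding IN_def mem_Collect_eq
proof (rule inj_onI)
  fix a b assume "a \<in> dom (hat e h)" "b \<in> dom (hat e h)" "hat e h a = hat e h b"
  then have ra: "h (e a) \<in> range e" and rb: "h (e b) \<in> range e"
    and eq: "inv e (h (e a)) = inv e (h (e b))"
    by (auto simp: hat_def dom_def split: if_splits)
  have "h (e a) = h (e b)" using f_inv_into_f[OF ra] f_inv_into_f[OF rb] eq by metis
  then have "e a = e b" using assms(1,2) by (meson inj_onD range_subsetD)
  then show "a = b" using assms(3) by (simp add: inj_eq)
qed

lemma pcomp_Some: "pcomp x Some = x"
  unfolding pcomp_def by (auto simp: map_comp_def)

lemma pid_True: "pid (\<lambda>_. True) = Some"
  unfolding pid_def by auto

lemma hat_comp_split: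
  "pcomp (hat e h) (hat e g) = pcomp (hat e (h \<circ> g)) (pid (\<lambda>n. g (e n) \<in> range e))"
  unfolding pcomp_def pid_def hat_def
  by (rule ext) (auto simp: map_comp_def f_inv_into_f)

theorem lemma6p5:
  fixes \<tau> :: "pbij topology" and Y :: "'a set" and e :: "nat \<Rightarrow> 'a"
    and fs :: "nat \<Rightarrow> 'a \<Rightarrow> 'a" and f :: "'a \<Rightarrow> 'a"
  assumes "Polish_space \<tau>"
    and "topological_inverse_semigroup_IN \<tau>"
    and "continuous_map cantor_space \<tau> pid"
    and "countable Y" and "inj e" and "range e \<subseteq> Y" and "infinite (Y - range e)"
    and "\<And>k. fs k \<in> topspace (Sinf Y)" and "f \<in> topspace (Sinf Y)"
    and "limitin (Sinf Y) fs f sequentially"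
  shows "\<exists>G. gdelta_in (Sinf Y) G \<and> (Sinf Y) closure_of G = topspace (Sinf Y) \<and>
             (\<forall>g\<in>G. limitin \<tau> (\<lambda>k. pcomp (hat e (fs k)) (hat e g))
                                 (pcomp (hat e f) (hat e g)) sequentially)"
proof -
  obtain M d where MS: "Metric_space M d" and tau: "\<tau> = Metric_space.mtopology M d"
    using assms(1) unfolding Polish_space_def completely_metrizable_space_def by blast
  have TI: "topspace \<tau> = IN"
    and cmul: "continuous_map (prod_topology \<tau> \<tau>) \<tau> (\<lambda>(f, g). pcomp f g)"
    using assms(2) unfolding topological_inverse_semigroup_IN_def by auto
  have pcompIN: "pcomp a b \<in> IN" if "a \<in> IN" "b \<in> IN" for a b
    using continuous_map_image_subset_topspace[OF cmul] that TI by force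
  have pidIN: "pid A \<in> IN" for A
    using continuous_map_image_subset_topspace[OF assms(3)] TI
    unfolding cantor_space_def by force
  have pcomp_lim: "limitin \<tau> (\<lambda>n. pcomp (a n) (b n)) (pcomp a0 b0) sequentially"
    if "limitin \<tau> a a0 sequentially" "limitin \<tau> b b0 sequentially" for a b a0 b0
  proof -
    have "limitin (prod_topology \<tau> \<tau>) (\<lambda>n. (a n, b n)) (a0, b0) sequentially"
      using that by (simp add: limitin_pairwise o_def)
    from continuous_map_limit[OF cmul this] show ?thesis by (simp add: o_def)
  qed
  let ?S = "topspace (Sinf Y)"
  have fbij: "bij_betw f Y Y" using assms(9) by (simp add: topspace_Sinf)
  define \<Phi> where "\<Phi> u = hat e (f \<circ> u)" for u
  define \<phi> where "\<phi> n u = pcomp (\<Phi> u) (pid (\<lambda>i. i < n))" for n u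
  have PhiIN: "\<Phi> u \<in> IN" if "u \<in> ?S" for u
  proof -
    have "bij_betw u Y Y" using that by (simp add: topspace_Sinf)
    then have "inj_on (f \<circ> u) Y" using fbij
      by (meson bij_betw_imp_inj_on bij_betw_trans)
    then show ?thesis unfolding \<Phi>_def using hat_IN assms(5,6) by blast
  qed
  have cont: "continuous_map (Sinf Y) \<tau> (\<phi> n)" for n
  proof (rule locally_const_cont)
    fix u assume u: "u \<in> ?S"
    show "\<phi> n u \<in> topspace \<tau>" unfolding \<phi>_def TI using pcompIN PhiIN[OF u] pidIN by blast
    have Wo: "openin (Sinf Y) {v \<in> ?S. \<forall>i<m. v (e i) = u (e i)}" for m
    proof (induction m)
      case 0
      then show ?case by simp
    next
      case (Suc m)
      have "{v \<in> ?S. \<forall>i<Suc m. v (e i) = u (e i)} =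
            {v \<in> ?S. \<forall>i<m. v (e i) = u (e i)} \<inter> {v \<in> ?S. v (e m) = u (e m)}"
        using less_Suc_eq by auto
      then show ?case using Suc openin_Sinf_eq[of "e m" Y "u (e m)"] assms(6)
        by (metis (no_types, lifting) openin_Int range_subsetD)
    qed
    have Wc: "\<phi> n v = \<phi> n u" if "\<forall>i<n. v (e i) = u (e i)" for v
      unfolding \<phi>_def \<Phi>_def pcomp_def pid_def hat_def
      by (rule ext) (use that in \<open>auto simp: map_comp_def\<close>)
    show "\<exists>W. openin (Sinf Y) W \<and> u \<in> W \<and> (\<forall>y\<in>W. \<phi> n y = \<phi> n u)"
    proof (intro exI[of _ "{v \<in> ?S. \<forall>i<n. v (e i) = u (e i)}"] conjI ballI Wo)
      show "u \<in> {v \<in> ?S. \<forall>i<n. v (e i) = u (e i)}" using u by blast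
      fix y assume "y \<in> {v \<in> ?S. \<forall>i<n. v (e i) = u (e i)}"
      then show "\<phi> n y = \<phi> n u" using Wc by blast
    qed
  qed
  have cantor_lim: "limitin cantor_space (\<lambda>n i. i < n) (\<lambda>_. True) sequentially"
    unfolding cantor_space_def limitin_componentwise limitin_discrete
    by (auto simp: eventually_sequentially) (metis Suc_le_eq)
  have pidlim: "limitin \<tau> (\<lambda>n. pid (\<lambda>i. i < n)) Some sequentially"
    using continuous_map_limit[OF assms(3) cantor_lim] by (simp add: o_def pid_True)
  have lim: "limitin \<tau> (\<lambda>n. \<phi> n u) (\<Phi> u) sequentially" if u: "u \<in> ?S" for u
  proof -
    have "limitin \<tau> (\<lambda>n. \<Phi> u) (\<Phi> u) sequentially" using PhiIN[OF u] TI by simp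
    from pcomp_lim[OF this pidlim] show ?thesis unfolding \<phi>_def by (simp add: pcomp_Some)
  qed
  obtain G where G: "gdelta_in (Sinf Y) G" "Sinf Y closure_of G = ?S"
    and Gc: "\<And>x xs. x \<in> G \<Longrightarrow> limitin (Sinf Y) xs x sequentially \<Longrightarrow>
                 limitin \<tau> (\<lambda>k. \<Phi> (xs k)) (\<Phi> x) sequentially"
    using baire1_cont[OF cm_Sinf[OF assms(4)] MS, of \<phi> \<Phi>] cont lim unfolding tau by blast
  have GS: "G \<subseteq> ?S" using G(1) unfolding gdelta_in_alt by (rule conjunct1)
  show ?thesis
  proof (intro exI[of _ G] conjI G ballI)
    fix g assume gG: "g \<in> G"
    have gS: "g \<in> ?S" using gG GS by blast
    then have gbij: "bij_betw g Y Y" and gext: "g \<in> extensional Y" by (auto simp: topspace_Sinf)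
    define u where "u k = restrict (\<lambda>y. inv_into Y f (fs k (g y))) Y" for k
    have fsbij: "bij_betw (fs k) Y Y" for k using assms(8)[of k] by (simp add: topspace_Sinf)
    have uS: "u k \<in> ?S" for k
    proof -
      have "bij_betw (inv_into Y f \<circ> (fs k \<circ> g)) Y Y"
        using bij_betw_inv_into[OF fbij] fsbij gbij by (meson bij_betw_trans)
      then have "bij_betw (u k) Y Y"
        by (rule bij_betw_cong[THEN iffD1, rotated]) (simp add: u_def)
      then show ?thesis by (simp add: topspace_Sinf u_def)
    qed
    have fslim: "\<forall>\<^sub>F k in sequentially. fs k y = f y" if "y \<in> Y" for y
    proof -
      have "limitin (product_topology (\<lambda>_. discrete_topology Y) Y) fs f sequentially"
        using assms(10) unfolding Sinf_def limitin_subtopology by blast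
      then show ?thesis using that unfolding limitin_componentwise limitin_discrete by blast
    qed
    have ulim: "limitin (Sinf Y) u g sequentially"
      unfolding Sinf_def limitin_subtopology
    proof (intro conjI)
      show "g \<in> {h \<in> extensional Y. bij_betw h Y Y}" using gS by (simp add: topspace_Sinf)
      show "\<forall>\<^sub>F k in sequentially. u k \<in> {h \<in> extensional Y. bij_betw h Y Y}"
        using uS by (simp add: topspace_Sinf)
      show "limitin (product_topology (\<lambda>_. discrete_topology Y) Y) u g sequentially"
        unfolding limitin_componentwise limitin_discrete
      proof (intro conjI ballI gext)
        show "\<forall>\<^sub>F k in sequentially. u k \<in> topspace (product_topology (\<lambda>_. discrete_topology Y) Y)"
        proof (rule always_eventually, rule allI)
          fix k
          have "bij_betw (u k) Y Y" "u k \<in> extensional Y" using uS[of k] by (auto simp: topspace_Sinf)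
          then show "u k \<in> topspace (product_topology (\<lambda>_. discrete_topology Y) Y)"
            using bij_betwE by (auto simp: PiE_def)
        qed
        fix y assume y: "y \<in> Y"
        then have gy: "g y \<in> Y" using gbij by (meson bij_betwE)
        show "g y \<in> Y" by (fact gy)
        show "\<forall>\<^sub>F k in sequentially. u k y = g y"
          using fslim[OF gy]
        proof (rule eventually_mono)
          fix k assume "fs k (g y) = f (g y)"
          then show "u k y = g y" using y gy fbij
            by (simp add: u_def bij_betw_imp_inj_on inv_into_f_f)
        qed
      qed
    qed
    have Phiu: "\<Phi> (u k) = hat e (fs k \<circ> g)" for k
    proof -
      have "f (u k (e n)) = fs k (g (e n))" for n
      proof -
        have en: "e n \<in> Y" using assms(6) by blast
        then have "fs k (g (e n)) \<in> Y" using fsbij gbij by (meson bij_betwE)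
        then show ?thesis using en fbij by (simp add: u_def bij_betw_def f_inv_into_f)
      qed
      then show ?thesis unfolding \<Phi>_def hat_def by auto
    qed
    have Phig: "\<Phi> g = hat e (f \<circ> g)" unfolding \<Phi>_def ..
    have l1: "limitin \<tau> (\<lambda>k. hat e (fs k \<circ> g)) (hat e (f \<circ> g)) sequentially"
      using Gc[OF gG ulim] by (simp add: Phiu Phig)
    have "limitin \<tau> (\<lambda>k. pid (\<lambda>n. g (e n) \<in> range e)) (pid (\<lambda>n. g (e n) \<in> range e)) sequentially"
      using pidIN TI by simp
    from pcomp_lim[OF l1 this] show "limitin \<tau> (\<lambda>k. pcomp (hat e (fs k)) (hat e g))
                                 (pcomp (hat e f) (hat e g)) sequentially"
      by (simp add: hat_comp_split)
  qed
qed

end
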